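(* None of the groups $(\wr\mathbf{Z})^{\infty}$, $(\mathbf{Z}\wr)^{\infty}$, $(\wr\mathbf{Z}\wr)^{\infty}$ embeds in $W=\bigoplus_{i\in\mathbf{N}}W_i$.
   Context: Restricted wreath product: $A\wr\mathbf{Z}=(\bigoplus_{i\in\mathbf{Z}}A)\rtimes\mathbf{Z}$. $W_0=1$, $W_i=W_{i-1}\wr\mathbf{Z}$; $(\mathbf{Z}\wr)^{\infty}$ is the ascending union of the $W_i$ with $W_i$ embedded in $W_{i+1}$ as the index-$0$ base summand. For permutation groups $(K,X)$, $(L,Y)$, the permutation wreath product $K\wr L\le\mathrm{Sym}(X\times Y)$ is generated by $(x,y)\mapsto(x\kappa,y)$, $(x,y')\mapsto(x,y')$ for $y'\neq y$ ($\kappa\in K$, $y\in Y$) and $(x,y)\mapsto(x,y\lambda)$ ($\lambda\in L$); it is associative. $P_1=\mathbf{Z}$ on $\mathbf{Z}$ by translation, $P_{k+1}=\mathbf{Z}\wr P_k$ with $P_k$ the top group; $(\wr\mathbf{Z})^{\infty}$ is the ascending union of the $P_k$ (a permutation group). $(\wr\mathbf{Z}\wr)^{\infty}$ is the permutation wreath product $(\wr\mathbf{Z})^{\infty}\wr(\mathbf{Z}\wr)^{\infty}$, where $(\mathbf{Z}\wr)^{\infty}$ acts on itself by right multiplication. Equivalently (up to isomorphism): with $\alpha,\beta_0\in PL_o(I)$ given by $x\alpha=x/4$ on $[0,\frac14)$, $x-\frac3{16}$ on $[\frac14,\frac7{16})$, $4x-\frac32$ on $[\frac7{16},\frac9{16})$,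 $x+\frac3{16}$ on $[\frac9{16},\frac34)$, $\frac14x+\frac34$ on $[\frac34,1]$, and $x\beta_0=x$ on $[0,\frac7{16})$, $2x-\frac7{16}$ on $[\frac7{16},\frac{15}{32})$, $x+\frac1{32}$ on $[\frac{15}{32},\frac12)$, $\frac12x+\frac9{32}$ on $[\frac12,\frac9{16})$, $x$ on $[\frac9{16},1]$, and $\beta_k=\alpha^{-k}\beta_0\alpha^k$, the three groups are generated by $\{\beta_i:i<0\}$, $\{\beta_i:i\ge0\}$, $\{\beta_i:i\in\mathbf{Z}\}$ respectively. *)

theory Defs
  imports "HOL-Algebra.Algebra"
begin

text \<open>The unit interval and its group of bijections (composition; the group generated
  by elements of PL_o(I) inside it is the same as the one generated inside PL_o(I)).\<close>

definition unitI :: "real set" where "unitI = {0..1}"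

abbreviation SymI :: "(real \<Rightarrow> real) monoid" where "SymI \<equiv> BijGroup unitI"

definition alpha :: "real \<Rightarrow> real" where
  "alpha = (\<lambda>x\<in>unitI.
     if x < 1/4 then x / 4
     else if x < 7/16 then x - 3/16
     else if x < 9/16 then 4 * x - 3/2
     else if x < 3/4 then x + 3/16
     else x / 4 + 3/4)"

definition beta0 :: "real \<Rightarrow> real" where
  "beta0 = (\<lambda>x\<in>unitI.
     if x < 7/16 then x
     else if x < 15/32 then 2 * x - 7/16
     else if x < 1/2 then x + 1/32
     else if x < 9/16 then x / 2 + 9/32
     else x)"

text \<open>Paper (right actions): beta_k = alpha^(-k) beta_0 alpha^k, i.e. x beta_k = ((x alpha^(-k)) beta_0) alpha^k.
  In BijGroup the product f \<otimes> g is f \<circ> g (apply g first), so this is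
  alpha^k \<otimes> beta_0 \<otimes> alpha^(-k).\<close>
definition beta :: "int \<Rightarrow> real \<Rightarrow> real" where
  "beta k = (alpha [^]\<^bsub>SymI\<^esub> k) \<otimes>\<^bsub>SymI\<^esub> beta0 \<otimes>\<^bsub>SymI\<^esub> (alpha [^]\<^bsub>SymI\<^esub> (- k))"

definition gen_by :: "int set \<Rightarrow> (real \<Rightarrow> real) monoid" where
  "gen_by S = SymI\<lparr>carrier := generate SymI (beta ` S)\<rparr>"

definition wrZ_inf :: "(real \<Rightarrow> real) monoid" where
  "wrZ_inf = gen_by {i. i < 0}"

definition Zwr_inf :: "(real \<Rightarrow> real) monoid" where
  "Zwr_inf = gen_by {i. 0 \<le> i}"

definition wrZwr_inf :: "(real \<Rightarrow> real) monoid" where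
  "wrZwr_inf = gen_by UNIV"

text \<open>Uniform encoding: an element of W_i = W_(i-1) wr Z = (\<Oplus>_(k\<in>Z) W_(i-1)) \<rtimes> Z is a
  function u :: int list \<Rightarrow> int, where u [] is the Z (top) coordinate and
  (\<lambda>ys. u (k # ys)) encodes the k-th base coordinate in W_(i-1).
  Product in A wr Z: (f,m)(g,n) = (k \<mapsto> f k * g (k - m), m + n).\<close>

fun wmult :: "(int list \<Rightarrow> int) \<Rightarrow> (int list \<Rightarrow> int) \<Rightarrow> int list \<Rightarrow> int" where
  "wmult u v [] = u [] + v []"
| "wmult u v (k # xs) = wmult (\<lambda>ys. u (k # ys)) (\<lambda>ys. v ((k - u []) # ys)) xs"

definition Wr :: "nat \<Rightarrow> (int list \<Rightarrow> int) monoid" where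
  "Wr i = \<lparr>carrier = {u. finite {xs. u xs \<noteq> 0} \<and> (\<forall>xs. i \<le> length xs \<longrightarrow> u xs = 0)},
           monoid.mult = wmult, one = (\<lambda>_. 0)\<rparr>"

definition Wsum :: "(nat \<Rightarrow> int list \<Rightarrow> int) monoid" where
  "Wsum = \<lparr>carrier = {w. (\<forall>i. w i \<in> carrier (Wr i)) \<and> finite {i. w i \<noteq> (\<lambda>_. 0)}},
           monoid.mult = (\<lambda>v w i. wmult (v i) (w i)), one = (\<lambda>i _. 0)\<rparr>"

definition embeds :: "('a, 'c) monoid_scheme \<Rightarrow> ('b, 'd) monoid_scheme \<Rightarrow> bool" where
  "embeds G H \<longleftrightarrow> (\<exists>h. h \<in> hom G H \<and> inj_on h (carrier G))"

end

theory Submission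
  imports Defs
begin
definition gcomm :: "('a,'b) monoid_scheme \<Rightarrow> 'a \<Rightarrow> 'a \<Rightarrow> 'a" where
  "gcomm H a b = a \<otimes>\<^bsub>H\<^esub> b \<otimes>\<^bsub>H\<^esub> inv\<^bsub>H\<^esub> a \<otimes>\<^bsub>H\<^esub> inv\<^bsub>H\<^esub> b"

primrec dser :: "('a,'b) monoid_scheme \<Rightarrow> 'a set \<Rightarrow> nat \<Rightarrow> 'a set" where
  "dser H S 0 = S"
| "dser H S (Suc n) = {gcomm H a b | a b. a \<in> dser H S n \<and> b \<in> dser H S n}"

lemma dser_mono: "S \<subseteq> T \<Longrightarrow> dser H S n \<subseteq> dser H T n"
  by (induction n) auto

lemma dser_Suc: "dser H S (Suc n) \<subseteq> dser H (dser H S 1) n"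
proof (induction n)
  case 0 then show ?case by simp
next
  case (Suc n)
  show ?case
  proof
    fix x assume "x \<in> dser H S (Suc (Suc n))"
    then obtain a b where "x = gcomm H a b" "a \<in> dser H S (Suc n)" "b \<in> dser H S (Suc n)"
      by (simp only: dser.simps(2)) blast
    then show "x \<in> dser H (dser H S 1) (Suc n)" using Suc.IH
      by (simp only: dser.simps(2)) blast
  qed
qed

lemma dser_sub: assumes "group H" "subgroup S H" shows "dser H S n \<subseteq> S"
proof (induction n)
  case 0 then show ?case by simp
next
  case (Suc n)
  interpret group H by fact
  have "gcomm H a b \<in> S" if "a \<in> S" "b \<in> S" for a b
    using that assms(2) unfolding gcomm_def
    by (simp add: subgroup.m_closed subgroup.m_inv_closed)
  with Suc show ?case by auto
qed

lemma wmult_0l: "wmult (\<lambda>_. 0) v xs = v xs"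
  by (induction xs arbitrary: v) auto

lemma wmult_0r: "wmult v (\<lambda>_. 0) xs = v xs"
  by (induction xs arbitrary: v) auto

lemma solv:
  assumes "group H"
  shows "subgroup S H \<Longrightarrow> (\<forall>x\<in>S. \<forall>y\<in>S. \<rho> (x \<otimes>\<^bsub>H\<^esub> y) = wmult (\<rho> x) (\<rho> y))
    \<Longrightarrow> (\<forall>x\<in>S. \<forall>xs. i \<le> length xs \<longrightarrow> \<rho> x xs = 0)
    \<Longrightarrow> i \<le> n \<Longrightarrow> x \<in> dser H S n \<Longrightarrow> \<rho> x = (\<lambda>_. 0)"
proof (induction i arbitrary: S \<rho> n x)
  case 0
  then show ?case using dser_sub[OF assms] by fastforce
next
  case (Suc i)
  interpret group H by fact
  obtain n' where n: "n = Suc n'" using Suc.prems(4) by (cases n) auto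
  note hom = Suc.prems(2)
  have SG: "S \<subseteq> carrier H" using Suc.prems(1) subgroup.subset by blast
  have one: "\<one>\<^bsub>H\<^esub> \<in> S" using Suc.prems(1) subgroup.one_closed by blast
  have top1: "\<rho> \<one>\<^bsub>H\<^esub> [] = 0"
  proof -
    have e: "\<rho> \<one>\<^bsub>H\<^esub> = wmult (\<rho> \<one>\<^bsub>H\<^esub>) (\<rho> \<one>\<^bsub>H\<^esub>)"
      using hom one by (metis one_closed l_one)
    have "\<rho> \<one>\<^bsub>H\<^esub> [] = \<rho> \<one>\<^bsub>H\<^esub> [] + \<rho> \<one>\<^bsub>H\<^esub> []"
      using fun_cong[OF e, of "[]"] by (simp only: wmult.simps)
    then show ?thesis by linarith
  qed
  have topm: "\<rho> (x \<otimes>\<^bsub>H\<^esub> y) [] = \<rho> x [] + \<rho> y []" if "x \<in> S" "y \<in> S" for x y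
    using hom that by simp
  have topi: "\<rho> (inv\<^bsub>H\<^esub> x) [] = - \<rho> x []" if "x \<in> S" for x
  proof -
    have ix: "inv\<^bsub>H\<^esub> x \<in> S" by (rule subgroup.m_inv_closed[OF Suc.prems(1) that])
    have "\<rho> (x \<otimes>\<^bsub>H\<^esub> inv\<^bsub>H\<^esub> x) [] = 0" using that SG top1 by (simp add: subset_iff)
    then show ?thesis using topm[OF that ix] by simp
  qed
  define S' where "S' = {x \<in> S. \<rho> x [] = 0}"
  have mS: "x \<otimes>\<^bsub>H\<^esub> y \<in> S" if "x \<in> S" "y \<in> S" for x y
    by (rule subgroup.m_closed[OF Suc.prems(1) that])
  have iS: "inv\<^bsub>H\<^esub> x \<in> S" if "x \<in> S" for x
    by (rule subgroup.m_inv_closed[OF Suc.prems(1) that])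
  have sub': "subgroup S' H"
    apply (rule subgroup.intro)
    using SG one top1 by (auto simp: S'_def mS iS topm topi)
  have d1: "dser H S 1 \<subseteq> S'"
    by (auto simp: S'_def gcomm_def mS iS topm topi)
  have chain: "dser H S n \<subseteq> dser H S' n'"
    using n dser_Suc[of H S n'] dser_mono[OF d1, of H n'] by simp
  have inS': "x \<in> S'" using Suc.prems(5) chain dser_sub[OF assms sub', of n'] by (simp add: subset_iff)
  have "\<rho> x (k # ys) = 0" for k ys
  proof -
    let ?r = "\<lambda>z ys. \<rho> z (k # ys)"
    have h1: "\<forall>x\<in>S'. \<forall>y\<in>S'. ?r (x \<otimes>\<^bsub>H\<^esub> y) = wmult (?r x) (?r y)"
      using hom by (auto simp: S'_def)
    have h2: "\<forall>x\<in>S'. \<forall>xs. i \<le> length xs \<longrightarrow> ?r x xs = 0"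
      using Suc.prems(3) by (auto simp: S'_def)
    have "?r x = (\<lambda>_. 0)"
      using Suc.IH[OF sub' h1 h2, of n' x] Suc.prems(4,5) n chain by auto
    then show ?thesis by meson
  qed
  moreover have "\<rho> x [] = 0" using inS' by (simp add: S'_def)
  ultimately show ?case by (metis list.exhaust)
qed

lemma leaf:
  assumes "group H" and hom: "\<forall>x\<in>carrier H. \<forall>y\<in>carrier H. \<rho> (x \<otimes>\<^bsub>H\<^esub> y) = wmult (\<rho> x) (\<rho> y)"
    and a: "a \<in> carrier H" "\<rho> a = (\<lambda>_. 0)" and y: "y \<in> carrier H"
  shows "\<rho> (gcomm H a y) = (\<lambda>_. 0) \<and> \<rho> (gcomm H y a) = (\<lambda>_. 0)"
proof -
  interpret group H by fact
  have l0: "wmult (\<lambda>_. 0) v = v" for v by (rule ext) (rule wmult_0l)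
  have r0: "wmult v (\<lambda>_. 0) = v" for v by (rule ext) (rule wmult_0r)
  have "\<rho> a = wmult (\<rho> a) (\<rho> \<one>\<^bsub>H\<^esub>)"
    using hom[rule_format, OF a(1) one_closed] r_one[OF a(1)] by metis
  then have o: "\<rho> \<one>\<^bsub>H\<^esub> = (\<lambda>_. 0)" using a(2) l0 by metis
  have "\<rho> (a \<otimes>\<^bsub>H\<^esub> inv\<^bsub>H\<^esub> a) = wmult (\<rho> a) (\<rho> (inv\<^bsub>H\<^esub> a))"
    using a(1) by (intro hom[rule_format]) auto
  then have "\<rho> (inv\<^bsub>H\<^esub> a) = \<rho> (a \<otimes>\<^bsub>H\<^esub> inv\<^bsub>H\<^esub> a)" using a(2) l0 by metis
  also have "\<dots> = (\<lambda>_. 0)" using a o by simp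
  finally have ia: "\<rho> (inv\<^bsub>H\<^esub> a) = (\<lambda>_. 0)" .
  have yy: "wmult (\<rho> y) (\<rho> (inv\<^bsub>H\<^esub> y)) = (\<lambda>_. 0)"
    using hom[rule_format, of y "inv\<^bsub>H\<^esub> y"] y o by simp
  show ?thesis
    unfolding gcomm_def using a y ia yy hom by (simp add: l0 r0)
qed

lemma noemb:
  assumes "group H" and h: "h \<in> hom H Wsum" and inj: "inj_on h (carrier H)" and g: "g \<in> carrier H"
    and T: "\<And>n. T n \<in> dser H (carrier H) n \<and> T n \<noteq> \<one>\<^bsub>H\<^esub> \<and>
      (\<forall>\<rho>. (\<forall>x\<in>carrier H. \<forall>y\<in>carrier H. \<rho> (x \<otimes>\<^bsub>H\<^esub> y) = wmult (\<rho> x) (\<rho> y))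
          \<longrightarrow> \<rho> g = (\<lambda>_. 0) \<longrightarrow> \<rho> (T n) = (\<lambda>_. 0))"
  shows False
proof -
  interpret group H by fact
  have hc: "h x \<in> carrier Wsum" if "x \<in> carrier H" for x using h that by (auto simp: hom_def)
  have hm: "h (x \<otimes>\<^bsub>H\<^esub> y) = (\<lambda>i. wmult (h x i) (h y i))" if "x \<in> carrier H" "y \<in> carrier H" for x y
    using h that by (auto simp: hom_def Wsum_def)
  have fin: "finite {i. h g i \<noteq> (\<lambda>_. 0)}" using hc[OF g] by (simp add: Wsum_def)
  obtain N where N: "\<And>i. h g i \<noteq> (\<lambda>_. 0) \<Longrightarrow> i < N"
    using finite_nat_bounded[OF fin] by auto
  have TN: "T N \<in> carrier H" using T[of N] dser_sub[OF assms(1) subgroup_self] by auto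
  have comp: "h (T N) i = (\<lambda>_. 0)" for i
  proof -
    let ?r = "\<lambda>x. h x i"
    have rh: "\<forall>x\<in>carrier H. \<forall>y\<in>carrier H. ?r (x \<otimes>\<^bsub>H\<^esub> y) = wmult (?r x) (?r y)"
      using hm by simp
    show ?thesis
    proof (cases "h g i = (\<lambda>_. 0)")
      case True then show ?thesis using spec[OF T[of N, THEN conjunct2, THEN conjunct2], of "\<lambda>x. h x i"] rh True by simp
    next
      case False
      then have "i \<le> N" using N[OF False] by simp
      moreover have "\<forall>x\<in>carrier H. \<forall>xs. i \<le> length xs \<longrightarrow> ?r x xs = 0"
        using hc by (auto simp: Wsum_def Wr_def)
      ultimately show ?thesis using solv[OF assms(1) subgroup_self rh _ _ T[of N, THEN conjunct1]] by simp
    qed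
  qed
  have "h (T N \<otimes>\<^bsub>H\<^esub> T N) = h (T N)"
    using hm[OF TN TN] comp by (simp add: fun_eq_iff wmult_0l)
  then have "T N \<otimes>\<^bsub>H\<^esub> T N = T N" using inj TN by (simp add: inj_on_def)
  then have "T N = \<one>\<^bsub>H\<^esub>" using TN by (metis l_cancel r_one one_closed)
  then show False using T[of N] by simp
qed



definition ainv :: "real \<Rightarrow> real" where
  "ainv y = (if y < 1/16 then 4*y else if y < 1/4 then y + 3/16 else if y < 3/4 then (y + 3/2)/4
     else if y < 15/16 then y - 3/16 else 4*y - 3)"

definition binv :: "real \<Rightarrow> real" where
  "binv y = (if y < 7/16 then y else if y < 1/2 then (y + 7/16)/2 else if y < 17/32 then y - 1/32
     else if y < 9/16 then 2*y - 9/16 else y)"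

lemma alpha_ok: "x \<in> unitI \<Longrightarrow> alpha x \<in> unitI \<and> ainv (alpha x) = x"
  by (auto simp: alpha_def ainv_def unitI_def field_simps)

lemma ainv_ok: "y \<in> unitI \<Longrightarrow> ainv y \<in> unitI \<and> alpha (ainv y) = y"
  by (auto simp: alpha_def ainv_def unitI_def field_simps)

lemma beta0_ok: "x \<in> unitI \<Longrightarrow> beta0 x \<in> unitI \<and> binv (beta0 x) = x"
  by (auto simp: beta0_def binv_def unitI_def field_simps)

lemma binv_ok: "y \<in> unitI \<Longrightarrow> binv y \<in> unitI \<and> beta0 (binv y) = y"
  by (auto simp: beta0_def binv_def unitI_def field_simps)

lemma alpha_Bij: "alpha \<in> Bij unitI"
  unfolding Bij_def
proof
  show "alpha \<in> extensional unitI" by (simp add: alpha_def)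
  have "bij_betw alpha unitI unitI"
    by (rule bij_betw_byWitness[where f'=ainv]) (use alpha_ok ainv_ok in auto)
  then show "alpha \<in> {f. bij_betw f unitI unitI}" by simp
qed

lemma beta0_Bij: "beta0 \<in> Bij unitI"
  unfolding Bij_def
proof
  show "beta0 \<in> extensional unitI" by (simp add: beta0_def)
  have "bij_betw beta0 unitI unitI"
    by (rule bij_betw_byWitness[where f'=binv]) (use beta0_ok binv_ok in auto)
  then show "beta0 \<in> {f. bij_betw f unitI unitI}" by simp
qed

lemma grpS: "group SymI" by (rule group_BijGroup)

lemma carS: "carrier SymI = Bij unitI" by (simp add: BijGroup_def)

lemma Bij_in: "f \<in> Bij unitI \<Longrightarrow> x \<in> unitI \<Longrightarrow> f x \<in> unitI"
  using Bij_imp_funcset by blast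

lemma Bij_inj: "f \<in> Bij unitI \<Longrightarrow> x \<in> unitI \<Longrightarrow> y \<in> unitI \<Longrightarrow> f x = f y \<Longrightarrow> x = y"
  by (auto simp: Bij_def bij_betw_def inj_on_def)

lemma mulS: "f \<in> Bij unitI \<Longrightarrow> g \<in> Bij unitI \<Longrightarrow> x \<in> unitI \<Longrightarrow> (f \<otimes>\<^bsub>SymI\<^esub> g) x = f (g x)"
  by (simp add: BijGroup_def compose_def)

lemma invS: assumes "f \<in> Bij unitI" "x \<in> unitI"
  shows "f ((inv\<^bsub>SymI\<^esub> f) x) = x" "(inv\<^bsub>SymI\<^esub> f) (f x) = x" "(inv\<^bsub>SymI\<^esub> f) x \<in> unitI"
    "inv\<^bsub>SymI\<^esub> f \<in> Bij unitI"
proof -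
  have b: "bij_betw f unitI unitI" using assms(1) by (simp add: Bij_def)
  have fx: "f x \<in> unitI" using Bij_in[OF assms] .
  have i: "inv\<^bsub>SymI\<^esub> f = (\<lambda>x\<in>unitI. inv_into unitI f x)" using inv_BijGroup[OF assms(1)] .
  show "f ((inv\<^bsub>SymI\<^esub> f) x) = x" using i assms(2) bij_betw_inv_into_right[OF b assms(2)] by simp
  show "(inv\<^bsub>SymI\<^esub> f) (f x) = x" using i fx bij_betw_inv_into_left[OF b assms(2)] by simp
  show "(inv\<^bsub>SymI\<^esub> f) x \<in> unitI" using i assms(2) b
    by (simp add: bij_betw_def inv_into_into)
  show "inv\<^bsub>SymI\<^esub> f \<in> Bij unitI" using i restrict_inv_into_Bij[OF assms(1)] by simp
qed

lemma inv_Bij: "f \<in> Bij unitI \<Longrightarrow> inv\<^bsub>SymI\<^esub> f \<in> Bij unitI"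
  by (simp add: inv_BijGroup restrict_inv_into_Bij)

lemma mclS: "f \<in> Bij unitI \<Longrightarrow> g \<in> Bij unitI \<Longrightarrow> f \<otimes>\<^bsub>SymI\<^esub> g \<in> Bij unitI"
  by (simp add: BijGroup_def compose_Bij)

lemma oneS: "x \<in> unitI \<Longrightarrow> \<one>\<^bsub>SymI\<^esub> x = x"
  by (simp add: BijGroup_def)

definition A :: "int \<Rightarrow> real \<Rightarrow> real" where "A k = alpha [^]\<^bsub>SymI\<^esub> k"

lemma A_Bij: "A k \<in> Bij unitI"
  using group.int_pow_closed[OF grpS, of alpha k] alpha_Bij by (simp add: A_def carS)

lemma A_Suc: "x \<in> unitI \<Longrightarrow> A (k + 1) x = A k (alpha x)"
proof -
  assume x: "x \<in> unitI"
  have "A (k+1) = A k \<otimes>\<^bsub>SymI\<^esub> alpha"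
    using group.int_pow_mult[OF grpS, of alpha k 1] group.int_pow_1[OF grpS, of alpha] alpha_Bij
    by (simp add: A_def carS)
  then show ?thesis using mulS[OF A_Bij alpha_Bij x] by simp
qed

lemma A_neg: "A (-k) = inv\<^bsub>SymI\<^esub> (A k)"
  using group.int_pow_neg[OF grpS, of alpha k] alpha_Bij by (simp add: A_def carS)

lemma beta_Bij: "beta k \<in> Bij unitI"
  unfolding beta_def using A_Bij[of k] A_Bij[of "-k"] beta0_Bij mclS
  by (metis A_def)

lemma beta_app: "x \<in> unitI \<Longrightarrow> beta k x = A k (beta0 ((inv\<^bsub>SymI\<^esub> (A k)) x))"
proof -
  assume x: "x \<in> unitI"
  have "beta k = A k \<otimes>\<^bsub>SymI\<^esub> beta0 \<otimes>\<^bsub>SymI\<^esub> inv\<^bsub>SymI\<^esub> (A k)"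
    unfolding beta_def A_neg[symmetric] by (simp add: A_def)
  moreover have "A k \<otimes>\<^bsub>SymI\<^esub> beta0 \<in> Bij unitI"
    using A_Bij beta0_Bij mclS by simp
  ultimately show ?thesis
    using x mulS[OF _ invS(4)[OF A_Bij x]] mulS A_Bij beta0_Bij invS(3)[OF A_Bij x]
    by simp
qed

definition I0 :: "real set" where "I0 = {7/16<..<9/16}"
definition J :: "real set" where "J = {31/64<..<33/64}"
definition Ik :: "int \<Rightarrow> real set" where "Ik k = A k ` I0"

lemma I0_sub: "I0 \<subseteq> unitI" by (auto simp: I0_def unitI_def)
lemma J_sub: "J \<subseteq> I0" by (auto simp: I0_def J_def)
lemma alpha_J: "z \<in> J \<Longrightarrow> alpha z \<in> I0" by (auto simp: alpha_def J_def I0_def unitI_def)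
lemma alpha_J2: "y \<in> I0 \<Longrightarrow> \<exists>z\<in>J. alpha z = y"
  by (rule bexI[of _ "(y + 3/2)/4"]) (auto simp: alpha_def J_def I0_def unitI_def field_simps)
lemma beta0_fix: "x \<in> unitI \<Longrightarrow> x \<notin> I0 \<Longrightarrow> beta0 x = x"
  by (auto simp: beta0_def I0_def)
lemma beta0_J: "z \<in> J \<Longrightarrow> beta0 z \<notin> J"
  by (auto simp: beta0_def J_def unitI_def)
lemma beta0_half: "beta0 (1/2) \<noteq> 1/2" by (simp add: beta0_def unitI_def)

lemma Ik_sub: "Ik k \<subseteq> unitI"
  using Bij_in[OF A_Bij] I0_sub by (auto simp: Ik_def)

lemma beta_fix: "x \<in> unitI \<Longrightarrow> x \<notin> Ik k \<Longrightarrow> beta k x = x"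
proof -
  assume x: "x \<in> unitI" "x \<notin> Ik k"
  let ?y = "(inv\<^bsub>SymI\<^esub> (A k)) x"
  have y: "?y \<in> unitI" using invS(3)[OF A_Bij x(1)] .
  have "?y \<notin> I0"
  proof
    assume "?y \<in> I0"
    then have "A k ?y \<in> Ik k" by (simp add: Ik_def)
    then show False using x invS(1)[OF A_Bij x(1)] by simp
  qed
  then show ?thesis using beta_app[OF x(1)] beta0_fix[OF y] invS(1)[OF A_Bij x(1)] by simp
qed

lemma Ik_mono1: "Ik k \<subseteq> Ik (k + 1)"
proof
  fix x assume "x \<in> Ik k"
  then obtain y where y: "y \<in> I0" "x = A k y" by (auto simp: Ik_def)
  obtain z where z: "z \<in> J" "alpha z = y" using alpha_J2[OF y(1)] by blast
  have "A (k+1) z = x" using A_Suc[of z k] z y J_sub I0_sub by auto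
  then show "x \<in> Ik (k+1)" using z J_sub by (auto simp: Ik_def)
qed

lemma Ik_mono: "Ik k \<subseteq> Ik (k + int n)"
proof (induction n)
  case 0 then show ?case by simp
next
  case (Suc n)
  have "k + int (Suc n) = (k + int n) + 1" by simp
  then show ?case using Suc Ik_mono1[of "k + int n"] by (metis subset_trans)
qed

lemma Ik_J: "x \<in> Ik k \<Longrightarrow> \<exists>z\<in>J. x = A (k+1) z"
proof -
  assume "x \<in> Ik k"
  then obtain y where y: "y \<in> I0" "x = A k y" by (auto simp: Ik_def)
  obtain z where z: "z \<in> J" "alpha z = y" using alpha_J2[OF y(1)] by blast
  have "A (k+1) z = x" using A_Suc[of z k] z y J_sub I0_sub by auto
  then show ?thesis using z by auto
qed

lemma AJ_Ik: "z \<in> J \<Longrightarrow> A (k+1) z \<in> Ik k"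
  using A_Suc[of z k] alpha_J J_sub I0_sub by (auto simp: Ik_def)

lemma beta_A: "z \<in> unitI \<Longrightarrow> beta k (A k z) = A k (beta0 z)"
  using beta_app[OF Bij_in[OF A_Bij]] invS(2)[OF A_Bij] by simp

lemma beta_disj: "x \<in> Ik k \<Longrightarrow> beta (k+1) x \<notin> Ik k"
proof
  assume x: "x \<in> Ik k" and b: "beta (k+1) x \<in> Ik k"
  obtain z where z: "z \<in> J" "x = A (k+1) z" using Ik_J[OF x] by blast
  obtain z' where z': "z' \<in> J" "beta (k+1) x = A (k+1) z'" using Ik_J[OF b] by blast
  have zu: "z \<in> unitI" "z' \<in> unitI" using z z' J_sub I0_sub by auto
  have "A (k+1) (beta0 z) = A (k+1) z'" using beta_A[OF zu(1), of "k+1"] z z' by simp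
  then have "beta0 z = z'" using Bij_inj[OF A_Bij beta0_ok[OF zu(1), THEN conjunct1] zu(2)] by simp
  then show False using beta0_J[OF z(1)] z' by simp
qed

lemma beta_pres: "x \<in> Ik k \<Longrightarrow> beta k x \<in> Ik k"
proof (rule ccontr)
  assume x: "x \<in> Ik k" and n: "beta k x \<notin> Ik k"
  have xu: "x \<in> unitI" using x Ik_sub by auto
  have "beta k (beta k x) = beta k x" using beta_fix[OF Bij_in[OF beta_Bij xu] n] .
  then have "beta k x = x" using Bij_inj[OF beta_Bij Bij_in[OF beta_Bij xu] xu] by simp
  then show False using x n by simp
qed

lemma beta_moves: "A k (1/2) \<in> Ik k \<and> beta k (A k (1/2)) \<noteq> A k (1/2)"
proof
  show "A k (1/2) \<in> Ik k" by (simp add: Ik_def I0_def)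
  have h: "(1/2::real) \<in> unitI" by (simp add: unitI_def)
  show "beta k (A k (1/2)) \<noteq> A k (1/2)"
    using beta_A[OF h] Bij_inj[OF A_Bij beta0_ok[OF h, THEN conjunct1] h] beta0_half by auto
qed

lemma comm_eval: assumes f: "f \<in> Bij unitI" and g: "g \<in> Bij unitI" and x: "x \<in> unitI"
  shows "gcomm SymI f g x = f (g ((inv\<^bsub>SymI\<^esub> f) ((inv\<^bsub>SymI\<^esub> g) x)))"
proof -
  have fi: "inv\<^bsub>SymI\<^esub> f \<in> Bij unitI" and gi: "inv\<^bsub>SymI\<^esub> g \<in> Bij unitI" using invS(4) f g x by auto
  have c1: "f \<otimes>\<^bsub>SymI\<^esub> g \<in> Bij unitI" using mclS f g by auto
  have c2: "f \<otimes>\<^bsub>SymI\<^esub> g \<otimes>\<^bsub>SymI\<^esub> inv\<^bsub>SymI\<^esub> f \<in> Bij unitI" using mclS c1 fi by auto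
  have u1: "(inv\<^bsub>SymI\<^esub> g) x \<in> unitI" using invS(3)[OF g x] .
  have u2: "(inv\<^bsub>SymI\<^esub> f) ((inv\<^bsub>SymI\<^esub> g) x) \<in> unitI" using invS(3)[OF f u1] .
  show ?thesis unfolding gcomm_def
    using mulS[OF c2 gi x] mulS[OF c1 fi u1] mulS[OF f g u2] by simp
qed

lemma comm_supp:
  assumes f: "f \<in> Bij unitI" and g: "g \<in> Bij unitI" and S: "S \<subseteq> unitI"
    and ffix: "\<forall>x\<in>unitI. x \<notin> S \<longrightarrow> f x = x" and gS: "\<forall>x\<in>S. g x \<notin> S"
  shows "\<forall>x\<in>S. gcomm SymI f g x = f x"
    and "\<forall>x\<in>unitI. x \<notin> S \<and> x \<notin> g ` S \<longrightarrow> gcomm SymI f g x = x"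
proof -
  have finv: "(inv\<^bsub>SymI\<^esub> f) y = y" if "y \<in> unitI" "y \<notin> S" for y
    using invS(2)[OF f that(1)] ffix that by metis
  show "\<forall>x\<in>S. gcomm SymI f g x = f x"
  proof
    fix x assume xS: "x \<in> S"
    have xu: "x \<in> unitI" using xS S by auto
    let ?y = "(inv\<^bsub>SymI\<^esub> g) x"
    have yu: "?y \<in> unitI" using invS(3)[OF g xu] .
    have gy: "g ?y = x" using invS(1)[OF g xu] .
    have "?y \<notin> S" using gS gy xS by metis
    then show "gcomm SymI f g x = f x" using comm_eval[OF f g xu] finv[OF yu] gy by simp
  qed
  show "\<forall>x\<in>unitI. x \<notin> S \<and> x \<notin> g ` S \<longrightarrow> gcomm SymI f g x = x"
  proof (intro ballI impI)
    fix x assume xu: "x \<in> unitI" and xn: "x \<notin> S \<and> x \<notin> g ` S"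
    let ?y = "(inv\<^bsub>SymI\<^esub> g) x"
    have yu: "?y \<in> unitI" using invS(3)[OF g xu] .
    have gy: "g ?y = x" using invS(1)[OF g xu] .
    have "?y \<notin> S" using gy xn by (metis image_eqI)
    then show "gcomm SymI f g x = x" using comm_eval[OF f g xu] finv[OF yu] gy ffix xu xn by simp
  qed
qed

fun F :: "nat \<Rightarrow> int \<Rightarrow> real \<Rightarrow> real" where
  "F 0 k = beta k"
| "F (Suc n) k = gcomm SymI (F n k) (F n (k + int n + 1))"

fun M :: "nat \<Rightarrow> int" where
  "M 0 = 0"
| "M (Suc n) = M n + int n + 1"

lemma M_nonneg: "0 \<le> M n" by (induction n) auto

lemma F_props: "F n k \<in> Bij unitI \<and> (\<forall>x\<in>Ik k. F n k x = beta k x)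
   \<and> (\<forall>x\<in>unitI. x \<notin> Ik (k + int n) \<longrightarrow> F n k x = x)"
proof (induction n arbitrary: k)
  case 0
  then show ?case using beta_Bij beta_fix by simp
next
  case (Suc n)
  let ?k' = "k + int n + 1"
  let ?S = "Ik (k + int n)"
  have a: "F n k \<in> Bij unitI" "\<forall>x\<in>unitI. x \<notin> ?S \<longrightarrow> F n k x = x"
    "\<forall>x\<in>Ik k. F n k x = beta k x" using Suc[of k] by auto
  have b: "F n ?k' \<in> Bij unitI" "\<forall>x\<in>Ik ?k'. F n ?k' x = beta ?k' x" using Suc[of ?k'] by auto
  have Ssub: "?S \<subseteq> Ik ?k'" using Ik_mono1[of "k + int n"] by simp
  have bS: "\<forall>x\<in>?S. F n ?k' x = beta ?k' x" using b(2) Ssub by auto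
  have gS: "\<forall>x\<in>?S. F n ?k' x \<notin> ?S" using bS beta_disj[of _ "k + int n"] by simp
  note cs = comm_supp[OF a(1) b(1) Ik_sub a(2) gS]
  have cl: "F (Suc n) k \<in> Bij unitI" using a(1) b(1) unfolding F.simps gcomm_def
    by (intro mclS inv_Bij)
  have p1: "\<forall>x\<in>Ik k. F (Suc n) k x = beta k x"
    using cs(1) a(3) Ik_mono[of k n] by auto
  have p2: "\<forall>x\<in>unitI. x \<notin> Ik (k + int (Suc n)) \<longrightarrow> F (Suc n) k x = x"
  proof (intro ballI impI)
    fix x assume xu: "x \<in> unitI" and xn: "x \<notin> Ik (k + int (Suc n))"
    have e: "k + int (Suc n) = ?k'" by simp
    have xn': "x \<notin> Ik ?k'" using xn e by metis
    have "x \<notin> ?S" using xn' Ssub by blast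
    moreover have "x \<notin> F n ?k' ` ?S"
    proof
      assume "x \<in> F n ?k' ` ?S"
      then obtain s where s: "s \<in> ?S" "x = F n ?k' s" by auto
      then have "x = beta ?k' s" using bS by simp
      then have "x \<in> Ik ?k'" using beta_pres[of s ?k'] s Ssub by auto
      then show False using xn' by simp
    qed
    ultimately show "F (Suc n) k x = x" using cs(2) xu by simp
  qed
  show ?case using cl p1 p2 by blast
qed

lemma F_nontriv: "F n k \<noteq> \<one>\<^bsub>SymI\<^esub>"
proof
  assume e: "F n k = \<one>\<^bsub>SymI\<^esub>"
  let ?p = "A k (1/2)"
  have pu: "?p \<in> unitI" using beta_moves Ik_sub by blast
  have "F n k ?p = beta k ?p" using F_props beta_moves by blast
  then have "beta k ?p = ?p" using e oneS[OF pu] by metis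
  then show False using beta_moves[of k] by simp
qed

lemma gen_sub: "subgroup (generate SymI (beta ` Sx)) SymI"
proof -
  have "beta ` Sx \<subseteq> carrier SymI" using beta_Bij by (auto simp: carS)
  then show ?thesis by (rule group.generate_is_subgroup[OF grpS])
qed

lemma gen_group: "group (gen_by Sx)"
  unfolding gen_by_def by (rule subgroup.subgroup_is_group[OF gen_sub grpS])

lemma gcomm_gen: "a \<in> generate SymI (beta ` Sx) \<Longrightarrow> b \<in> generate SymI (beta ` Sx)
  \<Longrightarrow> gcomm (gen_by Sx) a b = gcomm SymI a b"
  unfolding gcomm_def gen_by_def using group.m_inv_consistent[OF grpS gen_sub] by simp

lemma F_mem: "(\<forall>j. k \<le> j \<and> j \<le> k + M n \<longrightarrow> j \<in> Sx) \<Longrightarrow> F n k \<in> generate SymI (beta ` Sx)"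
proof (induction n arbitrary: k)
  case 0
  then show ?case by (auto intro: generate.incl)
next
  case (Suc n)
  have m: "0 \<le> M n" by (rule M_nonneg)
  have a: "F n k \<in> generate SymI (beta ` Sx)" using Suc.IH[of k] Suc.prems m by auto
  have b: "F n (k + int n + 1) \<in> generate SymI (beta ` Sx)"
    using Suc.IH[of "k + int n + 1"] Suc.prems m by auto
  show ?case unfolding F.simps gcomm_def
    using a b gen_sub by (simp add: subgroup.m_closed subgroup.m_inv_closed)
qed

lemma F_dser: "(\<forall>j. k \<le> j \<and> j \<le> k + M n \<longrightarrow> j \<in> Sx) \<Longrightarrow>
   F n k \<in> dser (gen_by Sx) (carrier (gen_by Sx)) n"
proof (induction n arbitrary: k)
  case 0
  then show ?case using F_mem[of k 0 Sx] by (simp add: gen_by_def)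
next
  case (Suc n)
  have m: "0 \<le> M n" by (rule M_nonneg)
  have pa: "\<forall>j. k \<le> j \<and> j \<le> k + M n \<longrightarrow> j \<in> Sx" using Suc.prems m by auto
  have pb: "\<forall>j. k + int n + 1 \<le> j \<and> j \<le> k + int n + 1 + M n \<longrightarrow> j \<in> Sx" using Suc.prems m by auto
  have "F (Suc n) k = gcomm (gen_by Sx) (F n k) (F n (k + int n + 1))"
    using gcomm_gen[OF F_mem[OF pa] F_mem[OF pb]] by simp
  then show ?case using Suc.IH[OF pa] Suc.IH[OF pb] by auto
qed

lemma F_leaf:
  assumes hom: "\<forall>x\<in>carrier (gen_by Sx). \<forall>y\<in>carrier (gen_by Sx).
      \<rho> (x \<otimes>\<^bsub>gen_by Sx\<^esub> y) = wmult (\<rho> x) (\<rho> y)"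
  shows "(\<forall>j. k \<le> j \<and> j \<le> k + M n \<longrightarrow> j \<in> Sx) \<Longrightarrow>
    (\<rho> (beta k) = (\<lambda>_. 0) \<longrightarrow> \<rho> (F n k) = (\<lambda>_. 0)) \<and>
    (\<rho> (beta (k + M n)) = (\<lambda>_. 0) \<longrightarrow> \<rho> (F n k) = (\<lambda>_. 0))"
proof (induction n arbitrary: k)
  case 0
  then show ?case by simp
next
  case (Suc n)
  have m: "0 \<le> M n" by (rule M_nonneg)
  have pa: "\<forall>j. k \<le> j \<and> j \<le> k + M n \<longrightarrow> j \<in> Sx" using Suc.prems m by auto
  have pb: "\<forall>j. k + int n + 1 \<le> j \<and> j \<le> k + int n + 1 + M n \<longrightarrow> j \<in> Sx" using Suc.prems m by auto
  have ca: "F n k \<in> carrier (gen_by Sx)" using F_mem[OF pa] by (simp add: gen_by_def)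
  have cb: "F n (k + int n + 1) \<in> carrier (gen_by Sx)" using F_mem[OF pb] by (simp add: gen_by_def)
  have e: "F (Suc n) k = gcomm (gen_by Sx) (F n k) (F n (k + int n + 1))"
    using gcomm_gen[OF F_mem[OF pa] F_mem[OF pb]] by simp
  have l1: "\<rho> (F n k) = (\<lambda>_. 0) \<Longrightarrow> \<rho> (F (Suc n) k) = (\<lambda>_. 0)"
    using leaf[OF gen_group hom ca _ cb] e by simp
  have l2: "\<rho> (F n (k + int n + 1)) = (\<lambda>_. 0) \<Longrightarrow> \<rho> (F (Suc n) k) = (\<lambda>_. 0)"
    using leaf[OF gen_group hom cb _ ca] e by simp
  have ee: "k + int n + 1 + M n = k + M (Suc n)" by simp
  show ?case using Suc.IH[OF pa] Suc.IH[OF pb] l1 l2 ee by metis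
qed

lemma main_gen:
  assumes kz: "\<And>n. (\<forall>j. kk n \<le> j \<and> j \<le> kk n + M n \<longrightarrow> j \<in> Sx) \<and> (kk n = kz \<or> kk n + M n = kz)"
    and kzS: "kz \<in> Sx"
  shows "\<not> embeds (gen_by Sx) Wsum"
proof
  assume "embeds (gen_by Sx) Wsum"
  then obtain h where h: "h \<in> hom (gen_by Sx) Wsum" "inj_on h (carrier (gen_by Sx))"
    by (auto simp: embeds_def)
  have g: "beta kz \<in> carrier (gen_by Sx)" using kzS by (auto simp: gen_by_def intro: generate.incl)
  show False
  proof (rule noemb[OF gen_group h g, of "\<lambda>n. F n (kk n)"])
    fix n
    have p: "\<forall>j. kk n \<le> j \<and> j \<le> kk n + M n \<longrightarrow> j \<in> Sx" using kz by blast
    have one: "\<one>\<^bsub>gen_by Sx\<^esub> = \<one>\<^bsub>SymI\<^esub>" by (simp add: gen_by_def)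
    show "F n (kk n) \<in> dser (gen_by Sx) (carrier (gen_by Sx)) n \<and> F n (kk n) \<noteq> \<one>\<^bsub>gen_by Sx\<^esub> \<and>
      (\<forall>\<rho>. (\<forall>x\<in>carrier (gen_by Sx). \<forall>y\<in>carrier (gen_by Sx).
          \<rho> (x \<otimes>\<^bsub>gen_by Sx\<^esub> y) = wmult (\<rho> x) (\<rho> y)) \<longrightarrow>
        \<rho> (beta kz) = (\<lambda>_. 0) \<longrightarrow> \<rho> (F n (kk n)) = (\<lambda>_. 0))"
    proof (intro conjI allI impI)
      show "F n (kk n) \<in> dser (gen_by Sx) (carrier (gen_by Sx)) n" using F_dser[OF p] .
      show "F n (kk n) \<noteq> \<one>\<^bsub>gen_by Sx\<^esub>" using F_nontriv one by simp
      fix \<rho> :: "(real \<Rightarrow> real) \<Rightarrow> int list \<Rightarrow> int"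
      assume hom: "\<forall>x\<in>carrier (gen_by Sx). \<forall>y\<in>carrier (gen_by Sx).
          \<rho> (x \<otimes>\<^bsub>gen_by Sx\<^esub> y) = wmult (\<rho> x) (\<rho> y)" and z: "\<rho> (beta kz) = (\<lambda>_. 0)"
      show "\<rho> (F n (kk n)) = (\<lambda>_. 0)" using F_leaf[OF hom p] z kz[of n] by auto
    qed
  qed
qed

theorem lemma21:
  shows "\<not> embeds wrZ_inf Wsum \<and> \<not> embeds Zwr_inf Wsum \<and> \<not> embeds wrZwr_inf Wsum"
proof (intro conjI)
  show "\<not> embeds wrZ_inf Wsum" unfolding wrZ_inf_def
    by (rule main_gen[where kk="\<lambda>n. -1 - M n" and kz="-1"]) auto
  show "\<not> embeds Zwr_inf Wsum" unfolding Zwr_inf_def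
    by (rule main_gen[where kk="\<lambda>n. 0" and kz=0]) auto
  show "\<not> embeds wrZwr_inf Wsum" unfolding wrZwr_inf_def
    by (rule main_gen[where kk="\<lambda>n. 0" and kz=0]) auto
qed

end
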